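(* Let $P$ be a finite set of points in $\mathbb{R}^m$, let $(A,B)$ be an optimal 2-means partition of $P$, and let $S\subseteq A$ be the set of low-revenue points of $A$. Then for any $u,v\in S$, $d(u,v)\le\frac29\max\{d(u,\rho(A)),d(v,\rho(A))\}$.
   Context: Distances are Euclidean: $d(x,y)=\|x-y\|_2$. For finite nonempty $S$, $\rho(S)=\frac{1}{|S|}\sum_{u\in S}u$ and $\Delta_1(S)=\sum_{u\in S}d(u,\rho(S))^2$. A partition $(A,B)$ of $P$ into two nonempty sets is an optimal 2-means partition if it minimizes $\Delta_1(A)+\Delta_1(B)$ among all partitions of $P$ into two nonempty sets. For $i\in A$, $j\in B$, $rev(i,j)=\min\{d(i,j)/\max\{d(i,\rho(A)),d(j,\rho(B))\},\,1\}$ (equal to $1$ if the maximum is $0$). For $u\in A$, $HR_B(u)=\{v\in B: rev(u,v)\ge\frac{1}{10}\}$ and $LR_B(u)=B\setminus HR_B(u)$. A point $u\in A$ is a high-revenue point if $|HR_B(u)|\ge\frac12|B|$, and a low-revenue point otherwise. *)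

theory Defs
  imports "HOL-Analysis.Analysis"
begin

definition centroid :: "(real^'m) set \<Rightarrow> real^'m" where
  "centroid S = (1 / real (card S)) *\<^sub>R (\<Sum>u\<in>S. u)"

definition cost1 :: "(real^'m) set \<Rightarrow> real" where
  "cost1 S = (\<Sum>u\<in>S. (dist u (centroid S))\<^sup>2)"

definition opt_2means :: "(real^'m) set \<Rightarrow> (real^'m) set \<Rightarrow> (real^'m) set \<Rightarrow> bool" where
  "opt_2means P A B \<longleftrightarrow>
     A \<noteq> {} \<and> B \<noteq> {} \<and> A \<inter> B = {} \<and> A \<union> B = P \<and>
     (\<forall>A' B'. A' \<noteq> {} \<longrightarrow> B' \<noteq> {} \<longrightarrow> A' \<inter> B' = {} \<longrightarrow> A' \<union> B' = P \<longrightarrow>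
        cost1 A + cost1 B \<le> cost1 A' + cost1 B')"

definition rev :: "(real^'m) set \<Rightarrow> (real^'m) set \<Rightarrow> real^'m \<Rightarrow> real^'m \<Rightarrow> real" where
  "rev A B i j =
     (let M = max (dist i (centroid A)) (dist j (centroid B))
      in if M = 0 then 1 else min (dist i j / M) 1)"

definition HR :: "(real^'m) set \<Rightarrow> (real^'m) set \<Rightarrow> real^'m \<Rightarrow> (real^'m) set" where
  "HR A B u = {v \<in> B. rev A B u v \<ge> 1/10}"

definition LR :: "(real^'m) set \<Rightarrow> (real^'m) set \<Rightarrow> real^'m \<Rightarrow> (real^'m) set" where
  "LR A B u = B - HR A B u"

definition high_revenue :: "(real^'m) set \<Rightarrow> (real^'m) set \<Rightarrow> real^'m \<Rightarrow> bool" where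
  "high_revenue A B u \<longleftrightarrow> real (card (HR A B u)) \<ge> real (card B) / 2"

definition low_revenue_points :: "(real^'m) set \<Rightarrow> (real^'m) set \<Rightarrow> (real^'m) set" where
  "low_revenue_points A B = {u \<in> A. \<not> high_revenue A B u}"

end

theory Submission
  imports Defs
begin

lemma norm_add_sq: fixes a b :: "'a::real_inner"
  shows "(norm (a+b))\<^sup>2 = (norm a)\<^sup>2 + (norm b)\<^sup>2 + 2 * (a \<bullet> b)"
  by (simp add: power2_norm_eq_inner inner_add_left inner_add_right inner_commute)

lemma centroid_min:
  fixes S :: "(real^'m) set"
  assumes "finite S" "S \<noteq> {}"
  shows "(\<Sum>x\<in>S. (dist x (centroid S))\<^sup>2) \<le> (\<Sum>x\<in>S. (dist x c)\<^sup>2)"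
proof -
  define r where "r = centroid S"
  have cS: "real (card S) \<noteq> 0" using assms by simp
  have sum0: "(\<Sum>x\<in>S. x - r) = 0"
  proof -
    have "(\<Sum>x\<in>S. x - r) = (\<Sum>x\<in>S. x) - real (card S) *\<^sub>R r"
      by (simp add: sum_subtractf scaleR_conv_of_real)
    also have "\<dots> = 0" using cS by (simp add: r_def centroid_def)
    finally show ?thesis .
  qed
  have each: "(dist x c)\<^sup>2 \<ge> (dist x r)\<^sup>2 + 2 * ((x - r) \<bullet> (r - c))" for x
  proof -
    have "x - c = (x - r) + (r - c)" by simp
    hence "(dist x c)\<^sup>2 = (norm ((x - r) + (r - c)))\<^sup>2" by (simp add: dist_norm)
    also have "\<dots> = (norm (x - r))\<^sup>2 + (norm (r - c))\<^sup>2 + 2 * ((x - r) \<bullet> (r - c))"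
      by (rule norm_add_sq)
    finally show ?thesis by (simp add: dist_norm)
  qed
  have "(\<Sum>x\<in>S. 2 * ((x - r) \<bullet> (r - c))) = 2 * ((\<Sum>x\<in>S. x - r) \<bullet> (r - c))"
    by (simp add: inner_sum_left sum_distrib_left)
  also have "\<dots> = 0" by (simp add: sum0)
  finally have z: "(\<Sum>x\<in>S. 2 * ((x - r) \<bullet> (r - c))) = 0" .
  have "(\<Sum>x\<in>S. (dist x r)\<^sup>2) = (\<Sum>x\<in>S. (dist x r)\<^sup>2 + 2 * ((x - r) \<bullet> (r - c)))"
    by (simp add: sum.distrib z)
  also have "\<dots> \<le> (\<Sum>x\<in>S. (dist x c)\<^sup>2)" by (rule sum_mono) (use each in auto)
  finally show ?thesis by (simp add: r_def)
qed

lemma cost1_le: "finite S \<Longrightarrow> S \<noteq> {} \<Longrightarrow> cost1 S \<le> (\<Sum>x\<in>S. (dist x c)\<^sup>2)"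
  unfolding cost1_def by (rule centroid_min)

lemma opt_closer:
  fixes P A B :: "(real^'m) set"
  assumes "finite P" "opt_2means P A B" "w \<in> B"
  shows "dist w (centroid B) \<le> dist w (centroid A)"
proof -
  have o: "A \<noteq> {}" "B \<noteq> {}" "A \<inter> B = {}" "A \<union> B = P"
    and opt: "\<And>A' B'. A' \<noteq> {} \<Longrightarrow> B' \<noteq> {} \<Longrightarrow> A' \<inter> B' = {} \<Longrightarrow> A' \<union> B' = P \<Longrightarrow>
        cost1 A + cost1 B \<le> cost1 A' + cost1 B'"
    using assms(2) unfolding opt_2means_def by blast+
  have fA: "finite A" and fB: "finite B" using o assms(1) by auto
  have wA: "w \<notin> A" using o assms(3) by blast
  show ?thesis
  proof (cases "B = {w}")
    case True
    then show ?thesis by (simp add: centroid_def)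
  next
    case False
    define B' where "B' = B - {w}"
    have B'ne: "B' \<noteq> {}" using False assms(3) B'_def by blast
    have fB': "finite B'" using fB B'_def by simp
    have 1: "cost1 A + cost1 B \<le> cost1 (insert w A) + cost1 B'"
      apply (rule opt) using B'ne o assms(3) wA B'_def by auto
    have 2: "cost1 (insert w A) \<le> cost1 A + (dist w (centroid A))\<^sup>2"
    proof -
      have "cost1 (insert w A) \<le> (\<Sum>x\<in>insert w A. (dist x (centroid A))\<^sup>2)"
        by (rule cost1_le) (use fA in auto)
      also have "\<dots> = (dist w (centroid A))\<^sup>2 + cost1 A"
        using fA wA by (simp add: cost1_def)
      finally show ?thesis by simp
    qed
    have 3: "cost1 B \<ge> (dist w (centroid B))\<^sup>2 + cost1 B'"
    proof -
      have "cost1 B = (dist w (centroid B))\<^sup>2 + (\<Sum>x\<in>B'. (dist x (centroid B))\<^sup>2)"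
        unfolding cost1_def B'_def using fB assms(3) by (simp add: sum.remove)
      moreover have "cost1 B' \<le> (\<Sum>x\<in>B'. (dist x (centroid B))\<^sup>2)"
        by (rule cost1_le[OF fB' B'ne])
      ultimately show ?thesis by simp
    qed
    have "(dist w (centroid B))\<^sup>2 \<le> (dist w (centroid A))\<^sup>2" using 1 2 3 by linarith
    then show ?thesis by (rule power2_le_imp_le) simp
  qed
qed

lemma step:
  fixes A B :: "(real^'m) set"
  assumes "rev A B u w < 1/10" "dist w (centroid B) \<le> dist w (centroid A)"
  shows "dist u w \<le> dist u (centroid A) / 9"
proof -
  define M where "M = max (dist u (centroid A)) (dist w (centroid B))"
  have r: "rev A B u w = (if M = 0 then 1 else min (dist u w / M) 1)"
    unfolding rev_def M_def Let_def by simp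
  have M0: "M \<noteq> 0" using assms(1) r by (auto split: if_splits)
  have "M \<ge> 0" unfolding M_def by (simp add: le_max_iff_disj)
  hence Mpos: "M > 0" using M0 by linarith
  have "dist u w / M < 1/10" using assms(1) r M0 by (auto split: if_splits)
  hence d: "dist u w < M / 10" using Mpos by (simp add: field_simps)
  have tri: "dist w (centroid A) \<le> dist w u + dist u (centroid A)" by (rule dist_triangle)
  have "dist w u = dist u w" by (rule dist_commute)
  show ?thesis
  proof (cases "dist u (centroid A) \<ge> dist w (centroid B)")
    case True
    then have "M = dist u (centroid A)" unfolding M_def by simp
    then show ?thesis using d zero_le_dist[of u w] by linarith
  next
    case False
    then have "M = dist w (centroid B)" unfolding M_def by simp
    then show ?thesis using d tri assms(2) \<open>dist w u = dist u w\<close> by simp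
  qed
qed

theorem mainTheorem5:
  fixes P A B :: "(real^'m) set"
  assumes "finite P"
    and "opt_2means P A B"
    and "u \<in> low_revenue_points A B"
    and "v \<in> low_revenue_points A B"
  shows "dist u v \<le> 2/9 * max (dist u (centroid A)) (dist v (centroid A))"
proof -
  have o: "A \<union> B = P" using assms(2) unfolding opt_2means_def by blast
  have fB: "finite B" using o assms(1) by auto
  have hu: "real (card (HR A B u)) < real (card B) / 2"
    using assms(3) unfolding low_revenue_points_def high_revenue_def by auto
  have hv: "real (card (HR A B v)) < real (card B) / 2"
    using assms(4) unfolding low_revenue_points_def high_revenue_def by auto
  have "card (HR A B u \<union> HR A B v) \<le> card (HR A B u) + card (HR A B v)"
    by (rule card_Un_le)
  hence "card (HR A B u \<union> HR A B v) < card B" using hu hv by linarith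
  moreover have "HR A B u \<union> HR A B v \<subseteq> B" unfolding HR_def by auto
  ultimately have "\<not> B \<subseteq> HR A B u \<union> HR A B v"
    using fB by (meson card_mono finite_subset not_le)
  then obtain w where w: "w \<in> B" "w \<notin> HR A B u" "w \<notin> HR A B v" by blast
  have ru: "rev A B u w < 1/10" and rv: "rev A B v w < 1/10" using w unfolding HR_def by auto
  have c: "dist w (centroid B) \<le> dist w (centroid A)" by (rule opt_closer[OF assms(1,2) w(1)])
  have a: "dist u w \<le> dist u (centroid A) / 9" by (rule step[OF ru c])
  have b: "dist v w \<le> dist v (centroid A) / 9" by (rule step[OF rv c])
  have "dist u v \<le> dist u w + dist v w" using dist_triangle[of u v w] dist_commute[of w v] by linarith
  thus ?thesis using a b by (auto simp: max_def)
qed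

end
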